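(* Let $K>0$. There exist $K'>0$ and $\epsilon_0>0$ such that for every $0<\epsilon\le\epsilon_0$ and every corner tensor $P$ with $\|P\|\leq K\epsilon$, the operator $B$ on $V\otimes V$ defined below satisfies: (1) there exist a Hilbert space $V_B$ with orthonormal basis $(f_m)$ and three-index Hilbert–Schmidt tensors $B_u,B_d$ with $\|B_u\|,\|B_d\|\leq K'\epsilon$ such that $B_{(i_1i_2),(k_1k_2)}=\sum_m (B_u)_{i_1k_1m}(B_d)_{i_2k_2m}$ for all $i_1,i_2,k_1,k_2\geq0$; (2) for $C=\exp(B)-B-I$ there exist a Hilbert space $V_C$ with orthonormal basis $(g_m)$ and three-index Hilbert–Schmidt tensors $C_u,C_d$ with $\|C_u\|,\|C_d\|\leq K'\epsilon^2$ such that $C_{(i_1i_2),(k_1k_2)}=\sum_m (C_u)_{i_1k_1m}(C_d)_{i_2k_2m}$; and the same holds for $\tilde C=\exp(-B)+B-I$ with tensors $\tilde C_u,\tilde C_d$ of norm $\leq K'\epsilon^2$.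
   Context: $V$ is a real separable infinite-dimensional Hilbert space with orthonormal basis $(e_i)_{i\geq0}$; $V\otimes V$ has orthonormal basis $e_a\otimes e_b$, indexed by pairs, and operator matrix entries are $B_{(i_1i_2),(k_1k_2)}=\langle e_{i_1}\otimes e_{i_2},B(e_{k_1}\otimes e_{k_2})\rangle$. Tensors have finite Hilbert–Schmidt norm (square root of the sum of squared components). A corner tensor is a 4-tensor $P=(P_{ijkl})$ (indices for right, top, left, bottom legs) whose only possibly nonzero components are $P_{ij00},P_{0jk0},P_{00kl},P_{i00l}$ with both displayed indices $\geq1$. Define, for $i,j\geq1$, $l_{ij}=\sum_{c\geq1}P_{0,0,i,c}P_{0,c,j,0}$ and $r_{ij}=\sum_{d\geq1}P_{i,0,0,d}P_{j,d,0,0}$, and set $l_{ij}=r_{ij}=0$ if $i=0$ or $j=0$. Let $|l\rangle=\sum_{ij}l_{ij}\,e_i\otimes e_j$, $\langle r|=\sum_{ij}r_{ij}\langle e_i\otimes e_j|$, and $B=|l\rangle\langle e_0\otimes e_0|-|e_0\otimes e_0\rangle\langle r|$. *)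

theory Defs
  imports "HOL-Analysis.Analysis"
begin

text \<open>Vectors of V are indexed by nat (basis e_i); basis of V (x) V indexed by nat \<times> nat.
  Operators on V (x) V are represented by their matrices (nat \<times> nat) \<Rightarrow> (nat \<times> nat) \<Rightarrow> real.\<close>

type_synonym tensor3 = "nat \<Rightarrow> nat \<Rightarrow> nat \<Rightarrow> real"
type_synonym tensor4 = "nat \<Rightarrow> nat \<Rightarrow> nat \<Rightarrow> nat \<Rightarrow> real"
type_synonym opmat = "nat \<times> nat \<Rightarrow> nat \<times> nat \<Rightarrow> real"

definition is_hs3 :: "tensor3 \<Rightarrow> bool" where
  "is_hs3 T \<longleftrightarrow> (\<lambda>(i, k, m). (T i k m)\<^sup>2) summable_on UNIV"

definition hs_norm3 :: "tensor3 \<Rightarrow> real" where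
  "hs_norm3 T = sqrt (\<Sum>\<^sub>\<infinity>(i, k, m) \<in> UNIV. (T i k m)\<^sup>2)"

definition is_hs4 :: "tensor4 \<Rightarrow> bool" where
  "is_hs4 P \<longleftrightarrow> (\<lambda>(i, j, k, l). (P i j k l)\<^sup>2) summable_on UNIV"

definition hs_norm4 :: "tensor4 \<Rightarrow> real" where
  "hs_norm4 P = sqrt (\<Sum>\<^sub>\<infinity>(i, j, k, l) \<in> UNIV. (P i j k l)\<^sup>2)"

text \<open>Corner tensor: only P_{ij00}, P_{0jk0}, P_{00kl}, P_{i00l} with both displayed indices \<ge> 1
  may be nonzero (legs: right, top, left, bottom).\<close>
definition corner_tensor :: "tensor4 \<Rightarrow> bool" where
  "corner_tensor P \<longleftrightarrow> is_hs4 P \<and>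
     (\<forall>i j k l. P i j k l \<noteq> 0 \<longrightarrow>
        (i \<ge> 1 \<and> j \<ge> 1 \<and> k = 0 \<and> l = 0) \<or>
        (i = 0 \<and> j \<ge> 1 \<and> k \<ge> 1 \<and> l = 0) \<or>
        (i = 0 \<and> j = 0 \<and> k \<ge> 1 \<and> l \<ge> 1) \<or>
        (i \<ge> 1 \<and> j = 0 \<and> k = 0 \<and> l \<ge> 1))"

definition lvec :: "tensor4 \<Rightarrow> nat \<Rightarrow> nat \<Rightarrow> real" where
  "lvec P i j = (if i = 0 \<or> j = 0 then 0
                 else (\<Sum>\<^sub>\<infinity>c \<in> {1..}. P 0 0 i c * P 0 c j 0))"

definition rvec :: "tensor4 \<Rightarrow> nat \<Rightarrow> nat \<Rightarrow> real" where
  "rvec P i j = (if i = 0 \<or> j = 0 then 0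
                 else (\<Sum>\<^sub>\<infinity>d \<in> {1..}. P i 0 0 d * P j d 0 0))"

text \<open>B = |l><e0 (x) e0| - |e0 (x) e0><r|, matrix entries B_{(i1 i2),(k1 k2)}.\<close>
definition Bmat :: "tensor4 \<Rightarrow> opmat" where
  "Bmat P = (\<lambda>(i1, i2) (k1, k2).
      lvec P i1 i2 * (if k1 = 0 \<and> k2 = 0 then 1 else 0)
    - (if i1 = 0 \<and> i2 = 0 then 1 else 0) * rvec P k1 k2)"

definition id_mat :: opmat where
  "id_mat = (\<lambda>x z. if x = z then 1 else 0)"

definition mat_mult :: "opmat \<Rightarrow> opmat \<Rightarrow> opmat" where
  "mat_mult A C = (\<lambda>x z. \<Sum>\<^sub>\<infinity>y \<in> UNIV. A x y * C y z)"

fun mat_pow :: "opmat \<Rightarrow> nat \<Rightarrow> opmat" where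
  "mat_pow A 0 = id_mat"
| "mat_pow A (Suc n) = mat_mult A (mat_pow A n)"

definition mat_exp :: "opmat \<Rightarrow> opmat" where
  "mat_exp A = (\<lambda>x z. \<Sum>n. mat_pow A n x z / fact n)"

definition factorises :: "opmat \<Rightarrow> tensor3 \<Rightarrow> tensor3 \<Rightarrow> bool" where
  "factorises A U D \<longleftrightarrow>
     (\<forall>i1 i2 k1 k2. ((\<lambda>m. U i1 k1 m * D i2 k2 m) has_sum A (i1, i2) (k1, k2)) UNIV)"

end

theory Submission
  imports Defs
begin


lemma fin_le_infsum:
  fixes g :: "'a \<Rightarrow> real"
  assumes "g summable_on UNIV" "\<And>y. g y \<ge> 0" "finite F"
  shows "sum g F \<le> infsum g UNIV"
  using infsum_mono2[of g F UNIV] assms by simp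

lemma bdd_sum:
  fixes f :: "'a \<Rightarrow> real"
  assumes "\<And>x. f x \<ge> 0" "\<And>F. finite F \<Longrightarrow> sum f F \<le> M"
  shows "f summable_on UNIV \<and> infsum f UNIV \<le> M"
proof -
  have s: "f summable_on UNIV"
    by (rule nonneg_bdd_above_summable_on) (use assms in \<open>auto intro!: bdd_aboveI[where M=M]\<close>)
  then show ?thesis using infsum_le_finite_sums[OF s] assms by blast
qed

lemma emb_bound:
  fixes f :: "'a \<Rightarrow> real" and g :: "'b \<Rightarrow> real"
  assumes g: "g summable_on UNIV" "\<And>y. g y \<ge> 0" and inj: "inj_on h S"
    and le: "\<And>x. x \<in> S \<Longrightarrow> 0 \<le> f x \<and> f x \<le> g (h x)" and z: "\<And>x. x \<notin> S \<Longrightarrow> f x = 0"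
  shows "f summable_on UNIV \<and> infsum f UNIV \<le> infsum g UNIV"
proof (rule bdd_sum)
  show "0 \<le> f x" for x using le z by (cases "x \<in> S") auto
  fix F :: "'a set" assume F: "finite F"
  have "sum f F = sum f (F \<inter> S)"
    by (rule sum.mono_neutral_right) (use F z in auto)
  also have "\<dots> \<le> sum (g \<circ> h) (F \<inter> S)"
    by (rule sum_mono) (use le in auto)
  also have "\<dots> = sum g (h ` (F \<inter> S))"
    by (rule sum.reindex[symmetric]) (meson inj inj_on_subset inf_le2)
  also have "\<dots> \<le> infsum g UNIV"
    by (rule fin_le_infsum) (use g F in auto)
  finally show "sum f F \<le> infsum g UNIV" .
qed

lemma prod_has_sum:
  fixes \<alpha> :: "'a \<Rightarrow> real" and \<beta> :: "'b \<Rightarrow> real"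
  assumes a: "\<alpha> summable_on UNIV" and b: "\<beta> summable_on UNIV"
  shows "((\<lambda>(c,d). \<alpha> c * \<beta> d) has_sum (infsum \<alpha> UNIV * infsum \<beta> UNIV)) UNIV"
proof -
  let ?f = "(\<lambda>(c,d). \<alpha> c * \<beta> d)"
  have aa: "(\<lambda>c. norm (\<alpha> c)) summable_on UNIV" "(\<lambda>c. norm (\<beta> c)) summable_on UNIV"
    using a b summable_on_iff_abs_summable_on_real by auto
  have "Infinite_Sum.abs_summable_on ?f (Sigma UNIV (\<lambda>_. UNIV))"
    unfolding Infinite_Sum.abs_summable_on_Sigma_iff
  proof (intro conjI ballI)
    fix x show "Infinite_Sum.abs_summable_on (\<lambda>y. ?f (x, y)) UNIV"
      using summable_on_cmult_right[OF aa(2), of "norm (\<alpha> x)"] by (simp add: abs_mult)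
  next
    have "(\<lambda>x. norm (\<alpha> x) * infsum (\<lambda>y. norm (\<beta> y)) UNIV) summable_on UNIV"
      using summable_on_cmult_left[OF aa(1)] by simp
    moreover have "infsum (\<lambda>y. norm (?f (x, y))) UNIV = norm (\<alpha> x) * infsum (\<lambda>y. norm (\<beta> y)) UNIV" for x
      by (simp add: abs_mult infsum_cmult_right')
    ultimately show "Infinite_Sum.abs_summable_on (\<lambda>x. infsum (\<lambda>y. norm (?f (x, y))) UNIV) UNIV"
      by (simp add: infsum_nonneg)
  qed
  then have s: "?f summable_on UNIV"
    using summable_on_iff_abs_summable_on_real by auto
  have "infsum ?f UNIV = infsum (\<lambda>x. infsum (\<lambda>y. ?f (x,y)) UNIV) UNIV"
    using infsum_Sigma_banach[of ?f UNIV "\<lambda>_. UNIV"] s by simp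
  also have "\<dots> = infsum (\<lambda>x. \<alpha> x * infsum \<beta> UNIV) UNIV"
    by (simp add: infsum_cmult_right')
  also have "\<dots> = infsum \<alpha> UNIV * infsum \<beta> UNIV"
    by (simp add: infsum_cmult_left')
  finally show ?thesis using s has_sum_iff by blast
qed

lemma real_cs_aux:
  fixes z X Y :: real
  assumes X: "X \<ge> 0" and Y: "Y \<ge> 0" and h: "\<And>t. t > 0 \<Longrightarrow> \<bar>z\<bar> \<le> (t * X + Y / t) / 2"
  shows "z\<^sup>2 \<le> X * Y"
proof (cases "X > 0 \<and> Y > 0")
  case True
  define t where "t = sqrt (Y / X)"
  have t: "t > 0" using True by (simp add: t_def)
  have "t * X = sqrt (X * Y)" using True
    by (simp add: t_def real_sqrt_divide real_sqrt_mult field_simps)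
  moreover have "Y / t = sqrt (X * Y)" using True
    by (simp add: t_def real_sqrt_divide real_sqrt_mult field_simps)
  ultimately have "\<bar>z\<bar> \<le> sqrt (X * Y)" using h[OF t] by simp
  then have "\<bar>z\<bar>\<^sup>2 \<le> (sqrt (X*Y))\<^sup>2" by (intro power_mono) auto
  then show ?thesis using X Y by simp
next
  case False
  have "z = 0"
  proof (rule ccontr)
    assume z: "z \<noteq> 0"
    show False
    proof (cases "X = 0")
      case True
      define t where "t = (Y + 1) / \<bar>z\<bar>"
      have t: "t > 0" using z Y by (simp add: t_def)
      have "\<bar>z\<bar> \<le> Y / t / 2" using h[OF t] True by simp
      also have "\<dots> = Y * \<bar>z\<bar> / (2 * (Y + 1))" using z Y by (simp add: t_def field_simps)
      also have "\<dots> < \<bar>z\<bar>" using z Y by (simp add: field_simps add_nonneg_pos)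
      finally show False by simp
    next
      case False
      then have Y0: "Y = 0" using \<open>\<not> (X > 0 \<and> Y > 0)\<close> X Y by auto
      define t where "t = \<bar>z\<bar> / (X + 1)"
      have t: "t > 0" using z X by (simp add: t_def)
      have "\<bar>z\<bar> \<le> t * X / 2" using h[OF t] Y0 by simp
      also have "\<dots> = \<bar>z\<bar> * X / (2 * (X + 1))" using z X by (simp add: t_def field_simps)
      also have "\<dots> < \<bar>z\<bar>" using z X by (simp add: field_simps add_nonneg_pos)
      finally show False by simp
    qed
  qed
  then show ?thesis using X Y by simp
qed


lemma infsum_cs:
  fixes x y :: "'a \<Rightarrow> real"
  assumes sx: "(\<lambda>c. (x c)\<^sup>2) summable_on A" and sy: "(\<lambda>c. (y c)\<^sup>2) summable_on A"
  shows "(\<lambda>c. x c * y c) summable_on A \<and>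
    (infsum (\<lambda>c. x c * y c) A)\<^sup>2 \<le> infsum (\<lambda>c. (x c)\<^sup>2) A * infsum (\<lambda>c. (y c)\<^sup>2) A"
proof
  have ax: "Infinite_Sum.abs_summable_on (\<lambda>c. x c * x c) A"
    using sx by (simp add: power2_eq_square abs_mult_self_eq)
  have ay: "Infinite_Sum.abs_summable_on (\<lambda>c. y c * y c) A"
    using sy by (simp add: power2_eq_square abs_mult_self_eq)
  show sxy: "(\<lambda>c. x c * y c) summable_on A"
    using abs_summable_product[OF ax ay] summable_on_iff_abs_summable_on_real by blast
  show "(infsum (\<lambda>c. x c * y c) A)\<^sup>2 \<le> infsum (\<lambda>c. (x c)\<^sup>2) A * infsum (\<lambda>c. (y c)\<^sup>2) A"
  proof (rule real_cs_aux)
    show "0 \<le> infsum (\<lambda>c. (x c)\<^sup>2) A" "0 \<le> infsum (\<lambda>c. (y c)\<^sup>2) A"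
      by (auto intro!: infsum_nonneg)
    fix t :: real assume t: "t > 0"
    let ?R = "\<lambda>c. (t * (x c)\<^sup>2 + (y c)\<^sup>2 / t) / 2"
    have key: "\<bar>x c * y c\<bar> \<le> ?R c" for c
    proof -
      have e1: "t * (x c)\<^sup>2 + (y c)\<^sup>2 / t - 2 * (x c * y c) = (t * x c - y c)\<^sup>2 / t"
        using t by (simp add: field_simps power2_eq_square)
      have e2: "t * (x c)\<^sup>2 + (y c)\<^sup>2 / t + 2 * (x c * y c) = (t * x c + y c)\<^sup>2 / t"
        using t by (simp add: field_simps power2_eq_square)
      have "0 \<le> t * (x c)\<^sup>2 + (y c)\<^sup>2 / t - 2 * (x c * y c)" unfolding e1 using t by auto
      moreover have "0 \<le> t * (x c)\<^sup>2 + (y c)\<^sup>2 / t + 2 * (x c * y c)" unfolding e2 using t by auto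
      moreover have "\<forall>X Z::real. 0 \<le> X - 2*Z \<longrightarrow> 0 \<le> X + 2*Z \<longrightarrow> \<bar>Z\<bar> \<le> X/2" by auto
      ultimately show ?thesis by blast
    qed
    have eq: "?R = (\<lambda>c. (t/2) * (x c)\<^sup>2 + (1/(2*t)) * (y c)\<^sup>2)"
      by (rule ext) (simp add: field_simps)
    have s1: "(\<lambda>c. (t/2) * (x c)\<^sup>2) summable_on A" by (intro summable_on_cmult_right sx)
    have s2: "(\<lambda>c. (1/(2*t)) * (y c)\<^sup>2) summable_on A" by (intro summable_on_cmult_right sy)
    have sR: "?R summable_on A"
      unfolding eq by (intro summable_on_add s1 s2)
    have iR: "infsum ?R A = (t * infsum (\<lambda>c. (x c)\<^sup>2) A + infsum (\<lambda>c. (y c)\<^sup>2) A / t) / 2"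
      unfolding eq infsum_add[OF s1 s2] infsum_cmult_right' by (simp add: field_simps)
    have "infsum (\<lambda>c. x c * y c) A \<le> infsum ?R A"
      by (rule infsum_mono[OF sxy sR]) (rule abs_le_D1[OF key])
    moreover have "- infsum (\<lambda>c. x c * y c) A \<le> infsum ?R A"
    proof -
      have "- infsum (\<lambda>c. x c * y c) A = infsum (\<lambda>c. - (x c * y c)) A"
        by (simp add: infsum_uminus)
      also have "\<dots> \<le> infsum ?R A"
        by (rule infsum_mono[OF _ sR]) (use summable_on_uminus[THEN iffD2, OF sxy] abs_le_D2[OF key] in auto)
      finally show ?thesis .
    qed
    ultimately show "\<bar>infsum (\<lambda>c. x c * y c) A\<bar> \<le> (t * infsum (\<lambda>c. (x c)\<^sup>2) A + infsum (\<lambda>c. (y c)\<^sup>2) A / t) / 2"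
      using iR by linarith
  qed
qed



lemma has_sum_split2:
  fixes H :: "'a \<Rightarrow> real"
  assumes iA: "inj hA" and iB: "inj hB" and dis: "range hA \<inter> range hB = {}"
    and un: "range hA \<union> range hB = UNIV"
    and F: "(F has_sum a) UNIV" and G: "(G has_sum b) UNIV"
    and e1: "\<And>x. H (hA x) = F x" and e2: "\<And>x. H (hB x) = G x"
  shows "(H has_sum (a + b)) UNIV"
proof -
  have "(H has_sum a) (range hA)"
    using has_sum_reindex[OF inj_on_subset[OF iA subset_UNIV], where g=H and x=a] F e1 by (simp add: o_def)
  moreover have "(H has_sum b) (range hB)"
    using has_sum_reindex[OF inj_on_subset[OF iB subset_UNIV], where g=H and x=b] G e2 by (simp add: o_def)
  ultimately have "(H has_sum (a + b)) (range hA \<union> range hB)"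
    using has_sum_Un_disjoint dis by blast
  then show ?thesis using un by simp
qed

lemma has_sum_ilv1:
  fixes f g :: "nat \<Rightarrow> real"
  assumes "(f has_sum a) UNIV" "(g has_sum b) UNIV"
  shows "((\<lambda>m. if even m then f (m div 2) else g (m div 2)) has_sum (a + b)) UNIV"
proof (rule has_sum_split2[where hA="\<lambda>m. 2*m" and hB="\<lambda>m. 2*m+1"])
  show "inj (\<lambda>m::nat. 2*m)" "inj (\<lambda>m::nat. 2*m+1)" by (auto simp: inj_def)
  show "range (\<lambda>m::nat. 2*m) \<inter> range (\<lambda>m. 2*m+1) = {}"
    by (auto simp: image_iff) (metis odd_two_times_div_two_nat even_mult_iff even_numeral odd_Suc_div_two even_Suc)
  show "range (\<lambda>m::nat. 2*m) \<union> range (\<lambda>m. 2*m+1) = UNIV"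
  proof (intro set_eqI iffI)
    fix m :: nat
    show "m \<in> range (\<lambda>m::nat. 2*m) \<union> range (\<lambda>m. 2*m+1)"
    proof (cases "even m")
      case True then have "m = 2 * (m div 2)" by simp
      then show ?thesis by blast
    next
      case False then have "m = 2 * (m div 2) + 1" by simp
      then show ?thesis by blast
    qed
  qed auto
qed (use assms in auto)

lemma has_sum_ilv3:
  fixes f g :: "nat \<times> nat \<times> nat \<Rightarrow> real"
  assumes "(f has_sum a) UNIV" "(g has_sum b) UNIV"
  shows "((\<lambda>(i,k,m). if even m then f (i,k,m div 2) else g (i,k,m div 2)) has_sum (a + b)) UNIV"
proof (rule has_sum_split2[where hA="\<lambda>(i,k,m). (i,k,2*m)" and hB="\<lambda>(i,k,m). (i,k,2*m+1)" and F=f and G=g])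
  show "inj (\<lambda>(i,k,m::nat). (i,k,2*m)::nat\<times>nat\<times>nat)" "inj (\<lambda>(i,k,m::nat). (i,k,2*m+1)::nat\<times>nat\<times>nat)"
    by (auto simp: inj_def)
  show "range (\<lambda>(i,k,m::nat). (i,k,2*m)::nat\<times>nat\<times>nat) \<inter> range (\<lambda>(i,k,m). (i,k,2*m+1)) = {}"
    by (auto simp: image_iff) (metis even_mult_iff even_numeral even_Suc)
  show "range (\<lambda>(i,k,m::nat). (i,k,2*m)::nat\<times>nat\<times>nat) \<union> range (\<lambda>(i,k,m). (i,k,2*m+1)) = UNIV"
  proof (intro set_eqI iffI)
    fix x :: "nat\<times>nat\<times>nat" 
    obtain i k m where x: "x = (i,k,m)" by (cases x) auto
    show "x \<in> range (\<lambda>(i,k,m::nat). (i,k,2*m)::nat\<times>nat\<times>nat) \<union> range (\<lambda>(i,k,m). (i,k,2*m+1))"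
    proof (cases "even m")
      case True
      then have "x = (\<lambda>(i,k,m::nat). (i,k,2*m)::nat\<times>nat\<times>nat) (i,k,m div 2)" using x by auto
      then show ?thesis by blast
    next
      case False
      then have "x = (\<lambda>(i,k,m::nat). (i,k,2*m+1)::nat\<times>nat\<times>nat) (i,k,m div 2)" using x by auto
      then show ?thesis by blast
    qed
  qed auto
qed (use assms in \<open>auto split: prod.splits\<close>)

definition ilv :: "tensor3 \<Rightarrow> tensor3 \<Rightarrow> tensor3" where
  "ilv U V = (\<lambda>i k m. if even m then U i k (m div 2) else V i k (m div 2))"

definition hsq :: "tensor3 \<Rightarrow> real \<Rightarrow> bool" where
  "hsq T M \<longleftrightarrow> is_hs3 T \<and> infsum (\<lambda>(i,k,m). (T i k m)\<^sup>2) UNIV \<le> M"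

lemma hsq_has_sum: "hsq T M \<longleftrightarrow> (\<exists>S. ((\<lambda>(i,k,m). (T i k m)\<^sup>2) has_sum S) UNIV \<and> S \<le> M)"
  unfolding hsq_def is_hs3_def
proof
  assume "(\<lambda>(i, k, m). (T i k m)\<^sup>2) summable_on UNIV \<and> infsum (\<lambda>(i, k, m). (T i k m)\<^sup>2) UNIV \<le> M"
  then show "\<exists>S. ((\<lambda>(i,k,m). (T i k m)\<^sup>2) has_sum S) UNIV \<and> S \<le> M"
    using has_sum_infsum by blast
next
  assume "\<exists>S. ((\<lambda>(i,k,m). (T i k m)\<^sup>2) has_sum S) UNIV \<and> S \<le> M"
  then obtain S where "((\<lambda>(i,k,m). (T i k m)\<^sup>2) has_sum S) UNIV" "S \<le> M" by blast
  then show "(\<lambda>(i, k, m). (T i k m)\<^sup>2) summable_on UNIV \<and> infsum (\<lambda>(i, k, m). (T i k m)\<^sup>2) UNIV \<le> M"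
    using has_sum_iff by (metis)
qed

lemma hsq_ilv: "hsq U M1 \<Longrightarrow> hsq V M2 \<Longrightarrow> hsq (ilv U V) (M1 + M2)"
  unfolding hsq_has_sum
proof (elim exE conjE)
  fix S1 S2 assume 1: "((\<lambda>(i,k,m). (U i k m)\<^sup>2) has_sum S1) UNIV" "S1 \<le> M1"
    and 2: "((\<lambda>(i,k,m). (V i k m)\<^sup>2) has_sum S2) UNIV" "S2 \<le> M2"
  have "((\<lambda>(i,k,m). if even m then (\<lambda>(i,k,m). (U i k m)\<^sup>2) (i,k,m div 2) else (\<lambda>(i,k,m). (V i k m)\<^sup>2) (i,k,m div 2)) has_sum (S1 + S2)) UNIV"
    by (rule has_sum_ilv3[OF 1(1) 2(1)])
  moreover have "(\<lambda>(i,k,m). if even m then (\<lambda>(i,k,m). (U i k m)\<^sup>2) (i,k,m div 2) else (\<lambda>(i,k,m). (V i k m)\<^sup>2) (i,k,m div 2))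
     = (\<lambda>(i,k,m). (ilv U V i k m)\<^sup>2)"
    by (auto simp: ilv_def fun_eq_iff)
  ultimately show "\<exists>S. ((\<lambda>(i,k,m). (ilv U V i k m)\<^sup>2) has_sum S) UNIV \<and> S \<le> M1 + M2"
    using 1(2) 2(2) by (intro exI[of _ "S1+S2"]) auto
qed

lemma hsq_scale: "hsq T M \<Longrightarrow> hsq (\<lambda>i k m. c * T i k m) (c\<^sup>2 * M)"
  unfolding hsq_has_sum
proof (elim exE conjE)
  fix S assume 1: "((\<lambda>(i,k,m). (T i k m)\<^sup>2) has_sum S) UNIV" "S \<le> M"
  have "((\<lambda>x. c\<^sup>2 * (\<lambda>(i,k,m). (T i k m)\<^sup>2) x) has_sum (c\<^sup>2 * S)) UNIV"
    by (rule has_sum_cmult_right[OF 1(1)])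
  moreover have "(\<lambda>x. c\<^sup>2 * (\<lambda>(i,k,m). (T i k m)\<^sup>2) x) = (\<lambda>(i,k,m). (c * T i k m)\<^sup>2)"
    by (auto simp: fun_eq_iff power_mult_distrib)
  ultimately show "\<exists>S. ((\<lambda>(i,k,m). (c * T i k m)\<^sup>2) has_sum S) UNIV \<and> S \<le> c\<^sup>2 * M"
    using 1(2) by (intro exI[of _ "c\<^sup>2 * S"]) (auto intro: mult_left_mono)
qed

lemma hsq_mono: "hsq T M \<Longrightarrow> M \<le> M' \<Longrightarrow> hsq T M'"
  unfolding hsq_def by auto

lemma hsq_norm: "hsq T M \<Longrightarrow> hs_norm3 T \<le> sqrt M"
  unfolding hsq_def hs_norm3_def by auto

lemma hsq_is_hs: "hsq T M \<Longrightarrow> is_hs3 T"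
  unfolding hsq_def by auto

lemma fact_add:
  assumes "factorises A U1 D1" "factorises A' U2 D2"
  shows "factorises (\<lambda>x z. A x z + A' x z) (ilv U1 U2) (ilv D1 D2)"
  unfolding factorises_def
proof (intro allI)
  fix i1 i2 k1 k2
  have "((\<lambda>m. if even m then (\<lambda>m. U1 i1 k1 m * D1 i2 k2 m) (m div 2) else (\<lambda>m. U2 i1 k1 m * D2 i2 k2 m) (m div 2))
      has_sum (A (i1, i2) (k1, k2) + A' (i1, i2) (k1, k2))) UNIV"
    using assms unfolding factorises_def by (intro has_sum_ilv1) auto
  moreover have "(\<lambda>m. if even m then (\<lambda>m. U1 i1 k1 m * D1 i2 k2 m) (m div 2) else (\<lambda>m. U2 i1 k1 m * D2 i2 k2 m) (m div 2))
     = (\<lambda>m. ilv U1 U2 i1 k1 m * ilv D1 D2 i2 k2 m)" by (auto simp: ilv_def)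
  ultimately show "((\<lambda>m. ilv U1 U2 i1 k1 m * ilv D1 D2 i2 k2 m) has_sum (\<lambda>x z. A x z + A' x z) (i1, i2) (k1, k2)) UNIV"
    by simp
qed

lemma fact_scale:
  assumes "factorises A U D"
  shows "factorises (\<lambda>x z. \<kappa> * A x z) (\<lambda>i k m. (sgn \<kappa> * sqrt \<bar>\<kappa>\<bar>) * U i k m) (\<lambda>i k m. sqrt \<bar>\<kappa>\<bar> * D i k m)"
  unfolding factorises_def
proof (intro allI)
  fix i1 i2 k1 k2
  have "((\<lambda>m. \<kappa> * (U i1 k1 m * D i2 k2 m)) has_sum (\<kappa> * A (i1, i2) (k1, k2))) UNIV"
    using assms unfolding factorises_def by (intro has_sum_cmult_right) auto
  moreover have "sgn \<kappa> * sqrt \<bar>\<kappa>\<bar> * sqrt \<bar>\<kappa>\<bar> = \<kappa>"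
    by (simp add: mult.assoc sgn_mult_abs)
  then have "(\<lambda>m. \<kappa> * (U i1 k1 m * D i2 k2 m)) = (\<lambda>m. (sgn \<kappa> * sqrt \<bar>\<kappa>\<bar>) * U i1 k1 m * (sqrt \<bar>\<kappa>\<bar> * D i2 k2 m))"
    by (auto simp: fun_eq_iff algebra_simps)
  ultimately show "((\<lambda>m. (sgn \<kappa> * sqrt \<bar>\<kappa>\<bar>) * U i1 k1 m * (sqrt \<bar>\<kappa>\<bar> * D i2 k2 m)) has_sum (\<lambda>x z. \<kappa> * A x z) (i1, i2) (k1, k2)) UNIV"
    by simp
qed

lemma hsq_scale_sq: "hsq T M \<Longrightarrow> hsq (\<lambda>i k m. (sgn \<kappa> * sqrt \<bar>\<kappa>\<bar>) * T i k m) (\<bar>\<kappa>\<bar> * M)"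
proof -
  assume h: "hsq T M"
  have "(sgn \<kappa> * sqrt \<bar>\<kappa>\<bar>)\<^sup>2 = \<bar>\<kappa>\<bar>"
    by (cases \<kappa> rule: linorder_cases) (auto simp: power_mult_distrib sgn_if)
  then show ?thesis using hsq_scale[OF h, of "sgn \<kappa> * sqrt \<bar>\<kappa>\<bar>"] by simp
qed

lemma hsq_scale_sq2: "hsq T M \<Longrightarrow> hsq (\<lambda>i k m. sqrt \<bar>\<kappa>\<bar> * T i k m) (\<bar>\<kappa>\<bar> * M)"
  using hsq_scale[of T M "sqrt \<bar>\<kappa>\<bar>"] by simp

lemma fact_cong: "factorises A U D \<Longrightarrow> (\<And>x z. A x z = A' x z) \<Longrightarrow> factorises A' U D"
  by (metis ext)



lemma rows:
  fixes f :: "nat \<times> nat \<Rightarrow> real"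
  assumes s: "f summable_on UNIV"
  shows "(\<forall>i. (\<lambda>c. f (i,c)) summable_on UNIV) \<and> (\<lambda>i. infsum (\<lambda>c. f (i,c)) UNIV) summable_on UNIV
     \<and> infsum (\<lambda>i. infsum (\<lambda>c. f (i,c)) UNIV) UNIV = infsum f UNIV"
proof (intro conjI allI)
  have s': "(\<lambda>(x,y). f (x,y)) summable_on Sigma UNIV (\<lambda>_. UNIV)" using s by simp
  show r: "(\<lambda>c. f (i,c)) summable_on UNIV" for i
    using summable_on_SigmaD1[OF s', of i] by simp
  show "(\<lambda>i. infsum (\<lambda>c. f (i,c)) UNIV) summable_on UNIV"
    using summable_on_SigmaD[of f UNIV "\<lambda>_. UNIV"] s r by simp
  show "infsum (\<lambda>i. infsum (\<lambda>c. f (i,c)) UNIV) UNIV = infsum f UNIV"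
    using infsum_Sigma_banach[of f UNIV "\<lambda>_. UNIV"] s by simp
qed

lemma has_sum_single_pt:
  fixes c :: real
  shows "((\<lambda>y. if y = y0 then c else 0) has_sum c) UNIV"
  by (rule has_sum_finite_neutralI[of "{y0}"]) auto

definition ev :: "nat \<times> nat \<Rightarrow> real" where
  "ev x = (if x = (0,0) then 1 else 0)"

lemma has_sum_ev: "((\<lambda>y. c * ev y) has_sum c) UNIV"
proof -
  have "(\<lambda>y. c * ev y) = (\<lambda>y. if y = (0,0) then c else 0)" by (auto simp: ev_def)
  then show ?thesis using has_sum_single_pt by simp
qed

definition Ec :: real where "Ec = (\<Sum>n. inverse (fact n))"

lemma summable_Ec: "summable (\<lambda>n. inverse (fact n) :: real)"
  using summable_exp[of "1::real"] by simp

lemma Ec_nonneg: "Ec \<ge> 0"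
  unfolding Ec_def by (rule suminf_nonneg[OF summable_Ec]) simp

lemma suminf_abs_bound:
  fixes f g :: "nat \<Rightarrow> real"
  assumes "\<And>n. \<bar>f n\<bar> \<le> g n" "summable g"
  shows "summable f \<and> \<bar>suminf f\<bar> \<le> suminf g"
proof
  have sa: "summable (\<lambda>n. \<bar>f n\<bar>)"
    by (rule summable_comparison_test'[OF assms(2)]) (use assms(1) in auto)
  then show "summable f" by (rule summable_rabs_cancel)
  have "\<bar>suminf f\<bar> \<le> (\<Sum>n. \<bar>f n\<bar>)" by (rule summable_rabs[OF sa])
  also have "\<dots> \<le> suminf g" by (rule suminf_le[OF assms(1) sa assms(2)])
  finally show "\<bar>suminf f\<bar> \<le> suminf g" .
qed

lemma sqsum_a:
  fixes p q a :: "nat \<times> nat \<Rightarrow> real"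
  assumes sp: "(\<lambda>x. (p x)\<^sup>2) summable_on UNIV" and sq: "(\<lambda>x. (q x)\<^sup>2) summable_on UNIV"
    and ha: "\<And>i j. ((\<lambda>c. p (i,c) * q (j,c)) has_sum a (i,j)) UNIV"
  shows "(\<lambda>y. (a y)\<^sup>2) summable_on UNIV \<and>
    infsum (\<lambda>y. (a y)\<^sup>2) UNIV \<le> infsum (\<lambda>x. (p x)\<^sup>2) UNIV * infsum (\<lambda>x. (q x)\<^sup>2) UNIV"
proof -
  let ?P = "\<lambda>i. infsum (\<lambda>c. (p (i,c))\<^sup>2) UNIV"
  let ?Q = "\<lambda>j. infsum (\<lambda>c. (q (j,c))\<^sup>2) UNIV"
  have rp: "\<forall>i. (\<lambda>c. (p (i,c))\<^sup>2) summable_on UNIV" "?P summable_on UNIV" "infsum ?P UNIV = infsum (\<lambda>x. (p x)\<^sup>2) UNIV"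
    using rows[of "\<lambda>x. (p x)\<^sup>2"] sp by auto
  have rq: "\<forall>i. (\<lambda>c. (q (i,c))\<^sup>2) summable_on UNIV" "?Q summable_on UNIV" "infsum ?Q UNIV = infsum (\<lambda>x. (q x)\<^sup>2) UNIV"
    using rows[of "\<lambda>x. (q x)\<^sup>2"] sq by auto
  have pw: "(a (i,j))\<^sup>2 \<le> ?P i * ?Q j" for i j
  proof -
    have "a (i,j) = infsum (\<lambda>c. p (i,c) * q (j,c)) UNIV" using ha by (metis infsumI)
    then show ?thesis using infsum_cs[of "\<lambda>c. p (i,c)" UNIV "\<lambda>c. q (j,c)"] rp rq by simp
  qed
  have hprod: "((\<lambda>(i,j). ?P i * ?Q j) has_sum (infsum ?P UNIV * infsum ?Q UNIV)) UNIV"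
    by (rule prod_has_sum[OF rp(2) rq(2)])
  have s: "(\<lambda>y. (a y)\<^sup>2) summable_on UNIV"
    by (rule summable_on_comparison_test[OF has_sum_imp_summable[OF hprod]]) (use pw in auto)
  moreover have "infsum (\<lambda>y. (a y)\<^sup>2) UNIV \<le> infsum (\<lambda>(i,j). ?P i * ?Q j) UNIV"
    by (rule infsum_mono[OF s has_sum_imp_summable[OF hprod]]) (use pw in auto)
  ultimately show ?thesis using hprod rp(3) rq(3) by (simp add: infsumI)
qed

locale cl =
  fixes p q u v a b :: "nat \<times> nat \<Rightarrow> real" and \<eta> :: real
  assumes sp: "(\<lambda>x. (p x)\<^sup>2) summable_on UNIV" and sq: "(\<lambda>x. (q x)\<^sup>2) summable_on UNIV"
    and su: "(\<lambda>x. (u x)\<^sup>2) summable_on UNIV" and sv: "(\<lambda>x. (v x)\<^sup>2) summable_on UNIV"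
    and bp: "infsum (\<lambda>x. (p x)\<^sup>2) UNIV \<le> \<eta>\<^sup>2" and bq: "infsum (\<lambda>x. (q x)\<^sup>2) UNIV \<le> \<eta>\<^sup>2"
    and bu: "infsum (\<lambda>x. (u x)\<^sup>2) UNIV \<le> \<eta>\<^sup>2" and bv: "infsum (\<lambda>x. (v x)\<^sup>2) UNIV \<le> \<eta>\<^sup>2"
    and eta0: "0 \<le> \<eta>" and eta1: "\<eta> \<le> 1"
    and p0: "\<And>c. p (0,c) = 0" and u0: "\<And>d. u (0,d) = 0"
    and ha: "\<And>i j. ((\<lambda>c. p (i,c) * q (j,c)) has_sum a (i,j)) UNIV"
    and hb: "\<And>i j. ((\<lambda>d. u (i,d) * v (j,d)) has_sum b (i,j)) UNIV"
begin

lemma a0: "a (0,j) = 0"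
proof -
  have "((\<lambda>c. p (0,c) * q (j,c)) has_sum 0) UNIV" by (simp add: p0)
  then show ?thesis using has_sum_unique[OF ha[of 0 j]] by blast
qed

lemma b0: "b (0,j) = 0"
proof -
  have "((\<lambda>d. u (0,d) * v (j,d)) has_sum 0) UNIV" by (simp add: u0)
  then show ?thesis using has_sum_unique[OF hb[of 0 j]] by blast
qed

lemma ev_a: "ev y * a y = 0" by (auto simp: ev_def a0)
lemma ev_b: "ev y * b y = 0" by (auto simp: ev_def b0)

definition s where "s = infsum (\<lambda>y. a y * b y) UNIV"

lemma s_facts: "((\<lambda>y. a y * b y) has_sum s) UNIV \<and> \<bar>s\<bar> \<le> \<eta>^4"
proof -
  have A: "(\<lambda>y. (a y)\<^sup>2) summable_on UNIV" "infsum (\<lambda>y. (a y)\<^sup>2) UNIV \<le> \<eta>\<^sup>2 * \<eta>\<^sup>2"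
  proof -
    show "(\<lambda>y. (a y)\<^sup>2) summable_on UNIV" using sqsum_a[OF sp sq ha] by blast
    have "infsum (\<lambda>y. (a y)\<^sup>2) UNIV \<le> infsum (\<lambda>x. (p x)\<^sup>2) UNIV * infsum (\<lambda>x. (q x)\<^sup>2) UNIV"
      using sqsum_a[OF sp sq ha] by blast
    also have "\<dots> \<le> \<eta>\<^sup>2 * \<eta>\<^sup>2" by (rule mult_mono[OF bp bq]) (auto intro: infsum_nonneg)
    finally show "infsum (\<lambda>y. (a y)\<^sup>2) UNIV \<le> \<eta>\<^sup>2 * \<eta>\<^sup>2" .
  qed
  have B: "(\<lambda>y. (b y)\<^sup>2) summable_on UNIV" "infsum (\<lambda>y. (b y)\<^sup>2) UNIV \<le> \<eta>\<^sup>2 * \<eta>\<^sup>2"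
  proof -
    show "(\<lambda>y. (b y)\<^sup>2) summable_on UNIV" using sqsum_a[OF su sv hb] by blast
    have "infsum (\<lambda>y. (b y)\<^sup>2) UNIV \<le> infsum (\<lambda>x. (u x)\<^sup>2) UNIV * infsum (\<lambda>x. (v x)\<^sup>2) UNIV"
      using sqsum_a[OF su sv hb] by blast
    also have "\<dots> \<le> \<eta>\<^sup>2 * \<eta>\<^sup>2" by (rule mult_mono[OF bu bv]) (auto intro: infsum_nonneg)
    finally show "infsum (\<lambda>y. (b y)\<^sup>2) UNIV \<le> \<eta>\<^sup>2 * \<eta>\<^sup>2" .
  qed
  have cs: "(\<lambda>y. a y * b y) summable_on UNIV" "s\<^sup>2 \<le> infsum (\<lambda>y. (a y)\<^sup>2) UNIV * infsum (\<lambda>y. (b y)\<^sup>2) UNIV"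
    using infsum_cs[OF A(1) B(1)] unfolding s_def by auto
  have h: "s\<^sup>2 \<le> (\<eta>^4)\<^sup>2"
    using cs(2) order.trans[OF cs(2) mult_mono[OF A(2) B(2)]] by (simp add: infsum_nonneg power2_eq_square power4_eq_xxxx)
  have "0 \<le> \<eta>^4" using eta0 by simp
  then have "\<bar>s\<bar> \<le> \<eta>^4" using power2_le_iff_abs_le[of "\<eta>^4" s] h by blast
  then show ?thesis using cs(1) unfolding s_def by auto
qed

lemma abs_s1: "\<bar>s\<bar> \<le> 1"
  using s_facts eta0 eta1 by (meson order.trans power_le_one)

definition Bm :: opmat where "Bm = (\<lambda>x z. a x * ev z - ev x * b z)"
definition B2 :: opmat where "B2 = (\<lambda>x z. - (a x * b z) - s * (ev x * ev z))"

lemma hs_BI: "((\<lambda>y. Bm x y * id_mat y z) has_sum Bm x z) UNIV"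
proof -
  have "(\<lambda>y. Bm x y * id_mat y z) = (\<lambda>y. if y = z then Bm x z else 0)" by (auto simp: id_mat_def)
  then show ?thesis using has_sum_single_pt by simp
qed

lemma hs_BB: "((\<lambda>y. Bm x y * Bm y z) has_sum B2 x z) UNIV"
proof -
  have eq: "(\<lambda>y. Bm x y * Bm y z) = (\<lambda>y. (- (a x * b z)) * ev y + (- (ev x * ev z)) * (a y * b y))"
    by (auto simp: fun_eq_iff Bm_def ev_def a0 b0)
  have "((\<lambda>y. (- (a x * b z)) * ev y + (- (ev x * ev z)) * (a y * b y)) has_sum ((- (a x * b z)) + (- (ev x * ev z)) * s)) UNIV"
    by (intro has_sum_add has_sum_ev has_sum_cmult_right) (use s_facts in auto)
  then show ?thesis unfolding eq by (simp add: B2_def algebra_simps)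
qed

lemma hs_BB2: "((\<lambda>y. Bm x y * B2 y z) has_sum (- s * Bm x z)) UNIV"
proof -
  have eq: "(\<lambda>y. Bm x y * B2 y z) = (\<lambda>y. (- s * a x * ev z) * ev y + (ev x * b z) * (a y * b y))"
    by (auto simp: fun_eq_iff Bm_def B2_def ev_def a0 b0)
  have "((\<lambda>y. (- s * a x * ev z) * ev y + (ev x * b z) * (a y * b y)) has_sum ((- s * a x * ev z) + (ev x * b z) * s)) UNIV"
    by (intro has_sum_add has_sum_ev has_sum_cmult_right) (use s_facts in auto)
  then show ?thesis unfolding eq by (simp add: Bm_def algebra_simps)
qed

definition Mf :: "real \<Rightarrow> real \<Rightarrow> real \<Rightarrow> opmat" where
  "Mf \<alpha> \<beta> \<gamma> = (\<lambda>x z. \<alpha> * id_mat x z + \<beta> * Bm x z + \<gamma> * B2 x z)"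

lemma mult_Mf: "mat_mult Bm (Mf \<alpha> \<beta> \<gamma>) = Mf 0 (\<alpha> - s * \<gamma>) \<beta>"
proof (intro ext)
  fix x z
  have "((\<lambda>y. \<alpha> * (Bm x y * id_mat y z) + \<beta> * (Bm x y * Bm y z) + \<gamma> * (Bm x y * B2 y z))
     has_sum (\<alpha> * Bm x z + \<beta> * B2 x z + \<gamma> * (- s * Bm x z))) UNIV"
    by (intro has_sum_add has_sum_cmult_right hs_BI hs_BB hs_BB2)
  moreover have "(\<lambda>y. \<alpha> * (Bm x y * id_mat y z) + \<beta> * (Bm x y * Bm y z) + \<gamma> * (Bm x y * B2 y z))
     = (\<lambda>y. Bm x y * Mf \<alpha> \<beta> \<gamma> y z)" by (auto simp: Mf_def algebra_simps)
  ultimately show "mat_mult Bm (Mf \<alpha> \<beta> \<gamma>) x z = Mf 0 (\<alpha> - s * \<gamma>) \<beta> x z"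
    unfolding mat_mult_def by (auto simp: Mf_def algebra_simps dest!: infsumI)
qed

definition phi0 :: "nat \<Rightarrow> real" where "phi0 n = (if odd n then (- s) ^ (n div 2) else 0)"
definition psi0 :: "nat \<Rightarrow> real" where "psi0 n = (if even n \<and> n > 0 then (- s) ^ (n div 2 - 1) else 0)"

lemma pow_Mf: "mat_pow Bm n = Mf (if n = 0 then 1 else 0) (phi0 n) (psi0 n)"
proof (induction n)
  case 0
  show ?case by (auto simp: Mf_def phi0_def psi0_def fun_eq_iff)
next
  case (Suc n)
  have c1: "(if n = 0 then 1 else 0) - s * psi0 n = phi0 (Suc n)"
  proof (cases "even n")
    case True
    then obtain k where k: "n = 2 * k" by blast
    show ?thesis using k by (cases k) (auto simp: phi0_def psi0_def)
  next
    case False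
    then show ?thesis by (auto simp: phi0_def psi0_def odd_pos)
  qed
  have c2: "phi0 n = psi0 (Suc n)"
  proof (cases "even n")
    case True
    then show ?thesis by (auto simp: phi0_def psi0_def)
  next
    case False
    then obtain k where k: "n = 2 * k + 1" by (metis oddE)
    show ?thesis using k by (auto simp: phi0_def psi0_def)
  qed
  show ?case by (simp add: Suc mult_Mf c1 c2)
qed

end


lemma hsq_slice_k:
  fixes p :: "nat \<times> nat \<Rightarrow> real"
  assumes s: "(\<lambda>x. (p x)\<^sup>2) summable_on UNIV" and b: "infsum (\<lambda>x. (p x)\<^sup>2) UNIV \<le> M"
  shows "hsq (\<lambda>i k c. if k = 0 then p (i,c) else 0) M"
proof -
  have "(\<lambda>(i::nat,k::nat,c::nat). (if k = 0 then p (i,c) else 0)\<^sup>2) summable_on UNIV \<and>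
     infsum (\<lambda>(i::nat,k::nat,c::nat). (if k = 0 then p (i,c) else 0)\<^sup>2) UNIV \<le> infsum (\<lambda>x. (p x)\<^sup>2) UNIV"
  proof (rule emb_bound[where f="\<lambda>(i::nat,k::nat,c::nat). (if k = 0 then p (i,c) else 0)\<^sup>2" and g="\<lambda>x. (p x)\<^sup>2"
        and h="\<lambda>(i::nat,k::nat,c::nat). (i,c)" and S="{x. fst (snd x) = 0}"])
    show "inj_on (\<lambda>(i::nat,k::nat,c::nat). (i,c)) {x::nat\<times>nat\<times>nat. fst (snd x) = 0}"
      by (auto simp: inj_on_def)
    show "(\<lambda>x. (p x)\<^sup>2) summable_on UNIV" by (rule s)
    show "0 \<le> (p y)\<^sup>2" for y by simp
    fix x :: "nat\<times>nat\<times>nat"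
    obtain i k c where x: "x = (i,k,c)" by (cases x) auto
    show "x \<in> {x. fst (snd x) = 0} \<Longrightarrow> 0 \<le> (case x of (i,k,c) \<Rightarrow> (if k = 0 then p (i,c) else 0)\<^sup>2) \<and>
        (case x of (i,k,c) \<Rightarrow> (if k = 0 then p (i,c) else 0)\<^sup>2) \<le> (p ((\<lambda>(i::nat,k::nat,c::nat). (i,c)) x))\<^sup>2"
      using x by simp
    show "x \<notin> {x. fst (snd x) = 0} \<Longrightarrow> (case x of (i,k,c) \<Rightarrow> (if k = 0 then p (i,c) else 0)\<^sup>2) = 0"
      using x by simp
  qed
  then show ?thesis using b unfolding hsq_def is_hs3_def by auto
qed

lemma hsq_slice_i:
  fixes p :: "nat \<times> nat \<Rightarrow> real"
  assumes s: "(\<lambda>x. (p x)\<^sup>2) summable_on UNIV" and b: "infsum (\<lambda>x. (p x)\<^sup>2) UNIV \<le> M"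
  shows "hsq (\<lambda>i k c. if i = 0 then p (k,c) else 0) M"
proof -
  have "(\<lambda>(i::nat,k::nat,c::nat). (if i = 0 then p (k,c) else 0)\<^sup>2) summable_on UNIV \<and>
     infsum (\<lambda>(i::nat,k::nat,c::nat). (if i = 0 then p (k,c) else 0)\<^sup>2) UNIV \<le> infsum (\<lambda>x. (p x)\<^sup>2) UNIV"
  proof (rule emb_bound[where f="\<lambda>(i::nat,k::nat,c::nat). (if i = 0 then p (k,c) else 0)\<^sup>2" and g="\<lambda>x. (p x)\<^sup>2"
        and h="\<lambda>(i::nat,k::nat,c::nat). (k,c)" and S="{x. fst x = 0}"])
    show "inj_on (\<lambda>(i::nat,k::nat,c::nat). (k,c)) {x::nat\<times>nat\<times>nat. fst x = 0}"
      by (auto simp: inj_on_def)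
    show "(\<lambda>x. (p x)\<^sup>2) summable_on UNIV" by (rule s)
    show "0 \<le> (p y)\<^sup>2" for y by simp
    fix x :: "nat\<times>nat\<times>nat"
    obtain i k c where x: "x = (i,k,c)" by (cases x) auto
    show "x \<in> {x. fst x = 0} \<Longrightarrow> 0 \<le> (case x of (i,k,c) \<Rightarrow> (if i = 0 then p (k,c) else 0)\<^sup>2) \<and>
        (case x of (i,k,c) \<Rightarrow> (if i = 0 then p (k,c) else 0)\<^sup>2) \<le> (p ((\<lambda>(i::nat,k::nat,c::nat). (k,c)) x))\<^sup>2"
      using x by simp
    show "x \<notin> {x. fst x = 0} \<Longrightarrow> (case x of (i,k,c) \<Rightarrow> (if i = 0 then p (k,c) else 0)\<^sup>2) = 0"
      using x by simp
  qed
  then show ?thesis using b unfolding hsq_def is_hs3_def by auto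
qed

lemma hsq_prod:
  fixes p u :: "nat \<times> nat \<Rightarrow> real"
  assumes sp: "(\<lambda>x. (p x)\<^sup>2) summable_on UNIV" and su: "(\<lambda>x. (u x)\<^sup>2) summable_on UNIV"
  shows "hsq (\<lambda>i k m. p (i, fst (prod_decode m)) * u (k, snd (prod_decode m)))
           (infsum (\<lambda>x. (p x)\<^sup>2) UNIV * infsum (\<lambda>x. (u x)\<^sup>2) UNIV)"
proof -
  let ?g = "\<lambda>(x::nat\<times>nat,y::nat\<times>nat). (p x)\<^sup>2 * (u y)\<^sup>2"
  let ?h = "\<lambda>(i::nat,k::nat,m::nat). ((i, fst (prod_decode m)), (k, snd (prod_decode m)))"
  let ?f = "\<lambda>(i::nat,k::nat,m::nat). (p (i, fst (prod_decode m)) * u (k, snd (prod_decode m)))\<^sup>2"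
  have hg: "(?g has_sum (infsum (\<lambda>x. (p x)\<^sup>2) UNIV * infsum (\<lambda>x. (u x)\<^sup>2) UNIV)) UNIV"
    by (rule prod_has_sum[OF sp su])
  have "?f summable_on UNIV \<and> infsum ?f UNIV \<le> infsum ?g UNIV"
  proof (rule emb_bound[where f="?f" and g="?g" and h="?h" and S=UNIV])
    show "inj_on ?h UNIV"
    proof (rule inj_onI)
      fix x y :: "nat\<times>nat\<times>nat"
      assume h: "?h x = ?h y"
      obtain i k m where x: "x = (i,k,m)" by (cases x) auto
      obtain i' k' m' where y: "y = (i',k',m')" by (cases y) auto
      have "prod_decode m = prod_decode m'" using h x y by (simp add: prod_eq_iff)
      then have "m = m'" using inj_prod_decode[of UNIV] by (auto dest: injD)
      then show "x = y" using h x y by simp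
    qed
    show "?g summable_on UNIV" using hg has_sum_imp_summable by blast
    show "0 \<le> ?g y" for y by (cases y) auto
    fix x :: "nat\<times>nat\<times>nat"
    obtain i k m where x: "x = (i,k,m)" by (cases x) auto
    show "x \<in> UNIV \<Longrightarrow> 0 \<le> ?f x \<and> ?f x \<le> ?g (?h x)" using x by (simp add: power_mult_distrib)
    show "x \<notin> UNIV \<Longrightarrow> ?f x = 0" by simp
  qed
  moreover have "infsum ?g UNIV = infsum (\<lambda>x. (p x)\<^sup>2) UNIV * infsum (\<lambda>x. (u x)\<^sup>2) UNIV"
    using hg by (rule infsumI)
  ultimately show ?thesis unfolding hsq_def is_hs3_def by auto
qed

lemma hsq_ee: "hsq (\<lambda>i k m. if i = 0 \<and> k = 0 \<and> m = 0 then 1 else 0) 1"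
proof -
  have "((\<lambda>(i::nat,k::nat,m::nat). (if i = 0 \<and> k = 0 \<and> m = 0 then 1 else 0 :: real)\<^sup>2) has_sum 1) UNIV"
    by (rule has_sum_finite_neutralI[of "{(0,0,0)}"]) (auto split: if_splits)
  then show ?thesis unfolding hsq_has_sum by blast
qed

context cl begin

definition Phi where "Phi = (\<Sum>n. phi0 n / fact n)"
definition Psi where "Psi = (\<Sum>n. psi0 n / fact n)"

lemma abs_pow_s: "\<bar>(- s) ^ k\<bar> \<le> 1"
  using abs_s1 by (simp add: power_abs power_le_one)

lemma phi_bound: "\<bar>phi0 n / fact n\<bar> \<le> inverse (fact n)"
  using abs_pow_s[of "n div 2"] by (auto simp: phi0_def divide_inverse abs_mult intro: mult_left_le_one_le)

lemma psi_bound: "\<bar>psi0 n / fact n\<bar> \<le> inverse (fact n)"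
  using abs_pow_s[of "n div 2 - 1"] by (auto simp: psi0_def divide_inverse abs_mult intro: mult_left_le_one_le)

lemma summable_phi: "summable (\<lambda>n. phi0 n / fact n)"
  using suminf_abs_bound[OF phi_bound summable_Ec] by blast

lemma summable_psi: "summable (\<lambda>n. psi0 n / fact n)"
  using suminf_abs_bound[OF psi_bound summable_Ec] by blast

lemma Psi_bound: "\<bar>Psi\<bar> \<le> Ec"
  using suminf_abs_bound[OF psi_bound summable_Ec] unfolding Psi_def Ec_def by blast

lemma G_bound: "\<bar>Phi - 1\<bar> \<le> \<bar>s\<bar> * Ec"
proof -
  let ?f = "\<lambda>n. phi0 n / fact n - (if n = 1 then 1 else 0)"
  have "(\<lambda>n. if n = 1 then (\<lambda>_. 1::real) n else 0) sums 1" by (rule sums_single)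
  then have "?f sums (Phi - 1)"
    using sums_diff[OF summable_sums[OF summable_phi]] unfolding Phi_def by simp
  then have e: "Phi - 1 = suminf ?f" by (simp add: sums_unique)
  have pw: "\<bar>?f n\<bar> \<le> \<bar>s\<bar> * inverse (fact n)" for n
  proof (cases "n = 1")
    case True then show ?thesis by (simp add: phi0_def)
  next
    case False
    show ?thesis
    proof (cases "odd n")
      case True
      with False have "n \<ge> 2" using odd_pos by fastforce
      then have "n div 2 \<ge> 1" using div_le_mono[of 2 n 2] by simp
      then have "\<bar>s\<bar> ^ (n div 2) \<le> \<bar>s\<bar> ^ 1"
        by (intro power_decreasing) (use abs_s1 in auto)
      then have "\<bar>(- s) ^ (n div 2)\<bar> \<le> \<bar>s\<bar>" by (simp add: power_abs)
      then show ?thesis using True False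
        by (auto simp: phi0_def divide_inverse abs_mult intro: mult_right_mono)
    next
      case False2: False
      then show ?thesis using False by (simp add: phi0_def)
    qed
  qed
  have "\<bar>suminf ?f\<bar> \<le> (\<Sum>n. \<bar>s\<bar> * inverse (fact n))"
    using suminf_abs_bound[OF pw summable_mult[OF summable_Ec]] by blast
  also have "\<dots> = \<bar>s\<bar> * Ec" unfolding Ec_def by (rule suminf_mult[OF summable_Ec])
  finally show ?thesis using e by simp
qed

lemma exp_formula: "mat_exp Bm x z = id_mat x z + Phi * Bm x z + Psi * B2 x z"
proof -
  have eq: "(\<lambda>n. mat_pow Bm n x z / fact n) =
     (\<lambda>n. (if n = 0 then (\<lambda>_. id_mat x z) n else 0) + (phi0 n / fact n) * Bm x z + (psi0 n / fact n) * B2 x z)"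
    by (auto simp: fun_eq_iff pow_Mf Mf_def add_divide_distrib)
  have "(\<lambda>n. (if n = 0 then (\<lambda>_. id_mat x z) n else 0) + (phi0 n / fact n) * Bm x z + (psi0 n / fact n) * B2 x z)
     sums (id_mat x z + Phi * Bm x z + Psi * B2 x z)"
    unfolding Phi_def Psi_def
    by (intro sums_add sums_single sums_mult2 summable_sums summable_phi summable_psi)
  then show ?thesis unfolding mat_exp_def eq by (rule sums_unique[symmetric])
qed

definition Uae :: tensor3 where "Uae = (\<lambda>i k c. if k = 0 then p (i,c) else 0)"
definition Dae :: tensor3 where "Dae = (\<lambda>i k c. if k = 0 then q (i,c) else 0)"
definition Ueb :: tensor3 where "Ueb = (\<lambda>i k c. if i = 0 then u (k,c) else 0)"
definition Deb :: tensor3 where "Deb = (\<lambda>i k c. if i = 0 then v (k,c) else 0)"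
definition Uab :: tensor3 where "Uab = (\<lambda>i k m. p (i, fst (prod_decode m)) * u (k, snd (prod_decode m)))"
definition Dab :: tensor3 where "Dab = (\<lambda>i k m. q (i, fst (prod_decode m)) * v (k, snd (prod_decode m)))"
definition Uee :: tensor3 where "Uee = (\<lambda>i k m. if i = 0 \<and> k = 0 \<and> m = 0 then 1 else 0)"

lemma fact_ae: "factorises (\<lambda>x z. a x * ev z) Uae Dae"
  unfolding factorises_def
proof (intro allI)
  fix i1 i2 k1 k2
  have "((\<lambda>m. p (i1,m) * q (i2,m) * ev (k1,k2)) has_sum (a (i1,i2) * ev (k1,k2))) UNIV"
    by (rule has_sum_cmult_left[OF ha])
  moreover have "(\<lambda>m. p (i1,m) * q (i2,m) * ev (k1,k2)) = (\<lambda>m. Uae i1 k1 m * Dae i2 k2 m)"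
    by (auto simp: fun_eq_iff Uae_def Dae_def ev_def)
  ultimately show "((\<lambda>m. Uae i1 k1 m * Dae i2 k2 m) has_sum (\<lambda>x z. a x * ev z) (i1, i2) (k1, k2)) UNIV"
    by simp
qed

lemma fact_eb: "factorises (\<lambda>x z. ev x * b z) Ueb Deb"
  unfolding factorises_def
proof (intro allI)
  fix i1 i2 k1 k2
  have "((\<lambda>m. ev (i1,i2) * (u (k1,m) * v (k2,m))) has_sum (ev (i1,i2) * b (k1,k2))) UNIV"
    by (rule has_sum_cmult_right[OF hb])
  moreover have "(\<lambda>m. ev (i1,i2) * (u (k1,m) * v (k2,m))) = (\<lambda>m. Ueb i1 k1 m * Deb i2 k2 m)"
    by (auto simp: fun_eq_iff Ueb_def Deb_def ev_def)
  ultimately show "((\<lambda>m. Ueb i1 k1 m * Deb i2 k2 m) has_sum (\<lambda>x z. ev x * b z) (i1, i2) (k1, k2)) UNIV"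
    by simp
qed

lemma fact_ab: "factorises (\<lambda>x z. a x * b z) Uab Dab"
  unfolding factorises_def
proof (intro allI)
  fix i1 i2 k1 k2
  let ?\<alpha> = "\<lambda>c. p (i1,c) * q (i2,c)" and ?\<beta> = "\<lambda>d. u (k1,d) * v (k2,d)"
  have ia: "infsum ?\<alpha> UNIV = a (i1,i2)" using ha by (rule infsumI)
  have ib: "infsum ?\<beta> UNIV = b (k1,k2)" using hb by (rule infsumI)
  have G: "((\<lambda>(c,d). ?\<alpha> c * ?\<beta> d) has_sum (a (i1,i2) * b (k1,k2))) UNIV"
    using prod_has_sum[OF has_sum_imp_summable[OF ha[of i1 i2]] has_sum_imp_summable[OF hb[of k1 k2]]] ia ib by simp
  have "(((\<lambda>(c,d). ?\<alpha> c * ?\<beta> d) \<circ> prod_decode) has_sum (a (i1,i2) * b (k1,k2))) UNIV"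
    using has_sum_reindex[OF inj_prod_decode[of UNIV], where g="\<lambda>(c,d). ?\<alpha> c * ?\<beta> d"] G
    by (simp add: surj_prod_decode)
  moreover have "((\<lambda>(c,d). ?\<alpha> c * ?\<beta> d) \<circ> prod_decode) = (\<lambda>m. Uab i1 k1 m * Dab i2 k2 m)"
    by (auto simp: fun_eq_iff Uab_def Dab_def split: prod.splits)
  ultimately show "((\<lambda>m. Uab i1 k1 m * Dab i2 k2 m) has_sum (\<lambda>x z. a x * b z) (i1, i2) (k1, k2)) UNIV"
    by simp
qed

lemma fact_ee: "factorises (\<lambda>x z. ev x * ev z) Uee Uee"
  unfolding factorises_def
proof (intro allI)
  fix i1 i2 k1 k2
  have "(\<lambda>m. Uee i1 k1 m * Uee i2 k2 m) = (\<lambda>m. if m = 0 then ev (i1,i2) * ev (k1,k2) else 0)"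
    by (auto simp: fun_eq_iff Uee_def ev_def)
  then show "((\<lambda>m. Uee i1 k1 m * Uee i2 k2 m) has_sum (\<lambda>x z. ev x * ev z) (i1, i2) (k1, k2)) UNIV"
    using has_sum_single_pt by simp
qed

lemma hsq_Uae: "hsq Uae (\<eta>\<^sup>2)" unfolding Uae_def by (rule hsq_slice_k[OF sp bp])
lemma hsq_Dae: "hsq Dae (\<eta>\<^sup>2)" unfolding Dae_def by (rule hsq_slice_k[OF sq bq])
lemma hsq_Ueb: "hsq Ueb (\<eta>\<^sup>2)" unfolding Ueb_def by (rule hsq_slice_i[OF su bu])
lemma hsq_Deb: "hsq Deb (\<eta>\<^sup>2)" unfolding Deb_def by (rule hsq_slice_i[OF sv bv])
lemma hsq_Uab: "hsq Uab (\<eta>^4)"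
proof -
  have "infsum (\<lambda>x. (p x)\<^sup>2) UNIV * infsum (\<lambda>x. (u x)\<^sup>2) UNIV \<le> \<eta>\<^sup>2 * \<eta>\<^sup>2"
    by (rule mult_mono[OF bp bu]) (auto intro: infsum_nonneg)
  then show ?thesis using hsq_mono[OF hsq_prod[OF sp su]] unfolding Uab_def
    by (simp add: power4_eq_xxxx power2_eq_square)
qed
lemma hsq_Dab: "hsq Dab (\<eta>^4)"
proof -
  have "infsum (\<lambda>x. (q x)\<^sup>2) UNIV * infsum (\<lambda>x. (v x)\<^sup>2) UNIV \<le> \<eta>\<^sup>2 * \<eta>\<^sup>2"
    by (rule mult_mono[OF bq bv]) (auto intro: infsum_nonneg)
  then show ?thesis using hsq_mono[OF hsq_prod[OF sq sv]] unfolding Dab_def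
    by (simp add: power4_eq_xxxx power2_eq_square)
qed
lemma hsq_Uee: "hsq Uee 1" unfolding Uee_def by (rule hsq_ee)

end


context cl begin

theorem main_B: "\<exists>U D. hsq U (2*\<eta>\<^sup>2) \<and> hsq D (2*\<eta>\<^sup>2) \<and> factorises Bm U D"
proof -
  have F: "factorises (\<lambda>x z. a x * ev z + (-1) * (ev x * b z))
      (ilv Uae (\<lambda>i k m. (sgn (-1::real) * sqrt \<bar>-1\<bar>) * Ueb i k m)) (ilv Dae (\<lambda>i k m. sqrt \<bar>-1::real\<bar> * Deb i k m))"
    by (rule fact_add[OF fact_ae fact_scale[OF fact_eb]])
  have F': "factorises Bm (ilv Uae (\<lambda>i k m. (sgn (-1::real) * sqrt \<bar>-1\<bar>) * Ueb i k m)) (ilv Dae (\<lambda>i k m. sqrt \<bar>-1::real\<bar> * Deb i k m))"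
    by (rule fact_cong[OF F]) (simp add: Bm_def)
  have HU: "hsq (ilv Uae (\<lambda>i k m. (sgn (-1::real) * sqrt \<bar>-1\<bar>) * Ueb i k m)) (\<eta>\<^sup>2 + \<bar>-1\<bar> * \<eta>\<^sup>2)"
    by (rule hsq_ilv[OF hsq_Uae hsq_scale_sq[OF hsq_Ueb]])
  have HD: "hsq (ilv Dae (\<lambda>i k m. sqrt \<bar>-1::real\<bar> * Deb i k m)) (\<eta>\<^sup>2 + \<bar>-1\<bar> * \<eta>\<^sup>2)"
    by (rule hsq_ilv[OF hsq_Dae hsq_scale_sq2[OF hsq_Deb]])
  have e: "\<eta>\<^sup>2 + \<bar>-1::real\<bar> * \<eta>\<^sup>2 = 2 * \<eta>\<^sup>2" by simp
  show ?thesis using F' HU HD unfolding e by blast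
qed

theorem main_C: "\<exists>U D. hsq U (4*Ec*\<eta>^4) \<and> hsq D (4*Ec*\<eta>^4) \<and>
   factorises (\<lambda>x z. mat_exp Bm x z - Bm x z - id_mat x z) U D"
proof -
  define G where "G = Phi - 1"
  define k4 where "k4 = - (Psi * s)"
  have F: "factorises (\<lambda>x z. (G * (a x * ev z) + (- G) * (ev x * b z)) + ((- Psi) * (a x * b z) + k4 * (ev x * ev z)))
     (ilv (ilv (\<lambda>i k m. (sgn G * sqrt \<bar>G\<bar>) * Uae i k m) (\<lambda>i k m. (sgn (-G) * sqrt \<bar>-G\<bar>) * Ueb i k m))
          (ilv (\<lambda>i k m. (sgn (-Psi) * sqrt \<bar>-Psi\<bar>) * Uab i k m) (\<lambda>i k m. (sgn k4 * sqrt \<bar>k4\<bar>) * Uee i k m)))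
     (ilv (ilv (\<lambda>i k m. sqrt \<bar>G\<bar> * Dae i k m) (\<lambda>i k m. sqrt \<bar>-G\<bar> * Deb i k m))
          (ilv (\<lambda>i k m. sqrt \<bar>-Psi\<bar> * Dab i k m) (\<lambda>i k m. sqrt \<bar>k4\<bar> * Uee i k m)))"
    by (rule fact_add[OF fact_add[OF fact_scale[OF fact_ae] fact_scale[OF fact_eb]]
                         fact_add[OF fact_scale[OF fact_ab] fact_scale[OF fact_ee]]])
  have F': "factorises (\<lambda>x z. mat_exp Bm x z - Bm x z - id_mat x z)
     (ilv (ilv (\<lambda>i k m. (sgn G * sqrt \<bar>G\<bar>) * Uae i k m) (\<lambda>i k m. (sgn (-G) * sqrt \<bar>-G\<bar>) * Ueb i k m))
          (ilv (\<lambda>i k m. (sgn (-Psi) * sqrt \<bar>-Psi\<bar>) * Uab i k m) (\<lambda>i k m. (sgn k4 * sqrt \<bar>k4\<bar>) * Uee i k m)))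
     (ilv (ilv (\<lambda>i k m. sqrt \<bar>G\<bar> * Dae i k m) (\<lambda>i k m. sqrt \<bar>-G\<bar> * Deb i k m))
          (ilv (\<lambda>i k m. sqrt \<bar>-Psi\<bar> * Dab i k m) (\<lambda>i k m. sqrt \<bar>k4\<bar> * Uee i k m)))"
    by (rule fact_cong[OF F], unfold exp_formula) (simp add: Bm_def B2_def G_def k4_def algebra_simps)
  have HU: "hsq (ilv (ilv (\<lambda>i k m. (sgn G * sqrt \<bar>G\<bar>) * Uae i k m) (\<lambda>i k m. (sgn (-G) * sqrt \<bar>-G\<bar>) * Ueb i k m))
          (ilv (\<lambda>i k m. (sgn (-Psi) * sqrt \<bar>-Psi\<bar>) * Uab i k m) (\<lambda>i k m. (sgn k4 * sqrt \<bar>k4\<bar>) * Uee i k m)))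
     ((\<bar>G\<bar> * \<eta>\<^sup>2 + \<bar>-G\<bar> * \<eta>\<^sup>2) + (\<bar>-Psi\<bar> * \<eta>^4 + \<bar>k4\<bar> * 1))"
    by (rule hsq_ilv[OF hsq_ilv[OF hsq_scale_sq[OF hsq_Uae] hsq_scale_sq[OF hsq_Ueb]]
                        hsq_ilv[OF hsq_scale_sq[OF hsq_Uab] hsq_scale_sq[OF hsq_Uee]]])
  have HD: "hsq (ilv (ilv (\<lambda>i k m. sqrt \<bar>G\<bar> * Dae i k m) (\<lambda>i k m. sqrt \<bar>-G\<bar> * Deb i k m))
          (ilv (\<lambda>i k m. sqrt \<bar>-Psi\<bar> * Dab i k m) (\<lambda>i k m. sqrt \<bar>k4\<bar> * Uee i k m)))
     ((\<bar>G\<bar> * \<eta>\<^sup>2 + \<bar>-G\<bar> * \<eta>\<^sup>2) + (\<bar>-Psi\<bar> * \<eta>^4 + \<bar>k4\<bar> * 1))"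
    by (rule hsq_ilv[OF hsq_ilv[OF hsq_scale_sq2[OF hsq_Dae] hsq_scale_sq2[OF hsq_Deb]]
                        hsq_ilv[OF hsq_scale_sq2[OF hsq_Dab] hsq_scale_sq2[OF hsq_Uee]]])
  have s4: "\<bar>s\<bar> \<le> \<eta>^4" using s_facts by blast
  have e21: "\<eta>\<^sup>2 \<le> 1" using eta0 eta1 by (simp add: power_le_one)
  have Gb: "\<bar>G\<bar> \<le> \<eta>^4 * Ec"
    using order.trans[OF G_bound[folded G_def] mult_right_mono[OF s4 Ec_nonneg]] .
  have g1: "\<bar>G\<bar> * \<eta>\<^sup>2 \<le> Ec * \<eta>^4"
    using order.trans[OF mult_left_le[OF e21 abs_ge_zero] Gb] by (simp add: mult.commute)
  have g3: "\<bar>Psi\<bar> * \<eta>^4 \<le> Ec * \<eta>^4"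
    by (rule mult_right_mono[OF Psi_bound]) (simp add: eta0)
  have g4: "\<bar>Psi * s\<bar> \<le> Ec * \<eta>^4"
    unfolding abs_mult by (rule mult_mono[OF Psi_bound s4]) (auto simp: Ec_nonneg)
  have g4': "\<bar>k4\<bar> \<le> Ec * \<eta>^4" using g4 by (simp add: k4_def)
  have tot: "(\<bar>G\<bar> * \<eta>\<^sup>2 + \<bar>-G\<bar> * \<eta>\<^sup>2) + (\<bar>-Psi\<bar> * \<eta>^4 + \<bar>k4\<bar> * 1) \<le> 4*Ec*\<eta>^4"
    using g1 g3 g4' by simp
  show ?thesis using F' hsq_mono[OF HU tot] hsq_mono[OF HD tot] by blast
qed

end


lemma block:
  fixes P :: tensor4 and f :: "nat \<times> nat \<Rightarrow> real" and h :: "nat \<times> nat \<Rightarrow> nat \<times> nat \<times> nat \<times> nat"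
  assumes hs: "is_hs4 P" and inj: "inj h" and fe: "\<And>x. f x = (case h x of (i,j,k,l) \<Rightarrow> P i j k l)"
  shows "(\<lambda>x. (f x)\<^sup>2) summable_on UNIV \<and> infsum (\<lambda>x. (f x)\<^sup>2) UNIV \<le> (hs_norm4 P)\<^sup>2"
proof -
  let ?g = "\<lambda>(i::nat,j::nat,k::nat,l::nat). (P i j k l)\<^sup>2"
  have g: "?g summable_on UNIV" using hs unfolding is_hs4_def by simp
  have "(\<lambda>x. (f x)\<^sup>2) summable_on UNIV \<and> infsum (\<lambda>x. (f x)\<^sup>2) UNIV \<le> infsum ?g UNIV"
  proof (rule emb_bound[where g="?g" and h=h and S=UNIV])
    show "?g summable_on UNIV" by (rule g)
    show "0 \<le> ?g y" for y by (auto split: prod.splits)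
    show "inj_on h UNIV" using inj by simp
    fix x
    show "x \<in> UNIV \<Longrightarrow> 0 \<le> (f x)\<^sup>2 \<and> (f x)\<^sup>2 \<le> ?g (h x)" by (simp add: fe split: prod.splits)
    show "x \<notin> UNIV \<Longrightarrow> (f x)\<^sup>2 = 0" by simp
  qed
  moreover have "(hs_norm4 P)\<^sup>2 = infsum ?g UNIV"
    unfolding hs_norm4_def by (rule real_sqrt_pow2) (auto intro!: infsum_nonneg split: prod.splits)
  ultimately show ?thesis by simp
qed

lemma corner_zeros:
  assumes "corner_tensor P"
  shows "P 0 0 i 0 = 0" "P 0 0 0 c = 0" "P 0 c 0 0 = 0" "P i 0 0 0 = 0"
proof -
  have h: "\<And>i j k l. P i j k l \<noteq> 0 \<Longrightarrow>
        (i \<ge> 1 \<and> j \<ge> 1 \<and> k = 0 \<and> l = 0) \<or> (i = 0 \<and> j \<ge> 1 \<and> k \<ge> 1 \<and> l = 0) \<or>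
        (i = 0 \<and> j = 0 \<and> k \<ge> 1 \<and> l \<ge> 1) \<or> (i \<ge> 1 \<and> j = 0 \<and> k = 0 \<and> l \<ge> 1)"
    using assms unfolding corner_tensor_def by blast
  show "P 0 0 i 0 = 0" using h[of 0 0 i 0] by fastforce
  show "P 0 0 0 c = 0" using h[of 0 0 0 c] by fastforce
  show "P 0 c 0 0 = 0" using h[of 0 c 0 0] by fastforce
  show "P i 0 0 0 = 0" using h[of i 0 0 0] by fastforce
qed

lemma lvec_has_sum:
  assumes cp: "corner_tensor P"
    and sp: "(\<lambda>x. (P 0 0 (fst x) (snd x))\<^sup>2) summable_on UNIV"
    and sq: "(\<lambda>x. (P 0 (snd x) (fst x) 0)\<^sup>2) summable_on UNIV"
  shows "((\<lambda>c. P 0 0 i c * P 0 c j 0) has_sum lvec P i j) UNIV"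
proof -
  have r1: "(\<lambda>c. (P 0 0 i c)\<^sup>2) summable_on UNIV"
    using rows[OF sp] by auto
  have r2: "(\<lambda>c. (P 0 c j 0)\<^sup>2) summable_on UNIV"
    using rows[OF sq] by auto
  have S: "(\<lambda>c. P 0 0 i c * P 0 c j 0) summable_on UNIV"
    using infsum_cs[OF r1 r2] by blast
  have "lvec P i j = infsum (\<lambda>c. P 0 0 i c * P 0 c j 0) UNIV"
  proof (cases "i = 0 \<or> j = 0")
    case True
    then have "(\<lambda>c. P 0 0 i c * P 0 c j 0) = (\<lambda>_. 0)"
      using corner_zeros[OF cp] by auto
    then show ?thesis using True by (simp add: lvec_def)
  next
    case False
    then have "lvec P i j = infsum (\<lambda>c. P 0 0 i c * P 0 c j 0) {1..}" by (simp add: lvec_def)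
    also have "\<dots> = infsum (\<lambda>c. P 0 0 i c * P 0 c j 0) UNIV"
      by (rule infsum_cong_neutral) (use corner_zeros[OF cp] in \<open>auto simp: not_less_eq_eq\<close>)
    finally show ?thesis .
  qed
  then show ?thesis using S by simp
qed

lemma rvec_has_sum:
  assumes cp: "corner_tensor P"
    and su: "(\<lambda>x. (P (fst x) 0 0 (snd x))\<^sup>2) summable_on UNIV"
    and sv: "(\<lambda>x. (P (fst x) (snd x) 0 0)\<^sup>2) summable_on UNIV"
  shows "((\<lambda>d. P i 0 0 d * P j d 0 0) has_sum rvec P i j) UNIV"
proof -
  have r1: "(\<lambda>c. (P i 0 0 c)\<^sup>2) summable_on UNIV"
    using rows[OF su] by auto
  have r2: "(\<lambda>c. (P j c 0 0)\<^sup>2) summable_on UNIV"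
    using rows[OF sv] by auto
  have S: "(\<lambda>d. P i 0 0 d * P j d 0 0) summable_on UNIV"
    using infsum_cs[OF r1 r2] by blast
  have "rvec P i j = infsum (\<lambda>d. P i 0 0 d * P j d 0 0) UNIV"
  proof (cases "i = 0 \<or> j = 0")
    case True
    then have "(\<lambda>d. P i 0 0 d * P j d 0 0) = (\<lambda>_. 0)"
      using corner_zeros[OF cp] by auto
    then show ?thesis using True by (simp add: rvec_def)
  next
    case False
    then have "rvec P i j = infsum (\<lambda>d. P i 0 0 d * P j d 0 0) {1..}" by (simp add: rvec_def)
    also have "\<dots> = infsum (\<lambda>d. P i 0 0 d * P j d 0 0) UNIV"
      by (rule infsum_cong_neutral) (use corner_zeros[OF cp] in \<open>auto simp: not_less_eq_eq\<close>)
    finally show ?thesis .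
  qed
  then show ?thesis using S by simp
qed



lemma main_fixed:
  fixes K \<epsilon> :: real and P :: tensor4
  assumes K: "K > 0" and e0: "0 < \<epsilon>" and e1: "\<epsilon> \<le> 1/K" and cp: "corner_tensor P" and nP: "hs_norm4 P \<le> K * \<epsilon>"
  shows "let B = Bmat P;
          C = (\<lambda>x z. mat_exp B x z - B x z - id_mat x z);
          Ct = (\<lambda>x z. mat_exp (\<lambda>x z. - B x z) x z + B x z - id_mat x z)
      in (\<exists>Bu Bd. is_hs3 Bu \<and> is_hs3 Bd \<and> hs_norm3 Bu \<le> (2*K + 2 * sqrt Ec * K\<^sup>2) * \<epsilon> \<and> hs_norm3 Bd \<le> (2*K + 2 * sqrt Ec * K\<^sup>2) * \<epsilon>
                  \<and> factorises B Bu Bd)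
       \<and> (\<exists>Cu Cd. is_hs3 Cu \<and> is_hs3 Cd \<and> hs_norm3 Cu \<le> (2*K + 2 * sqrt Ec * K\<^sup>2) * \<epsilon>\<^sup>2 \<and> hs_norm3 Cd \<le> (2*K + 2 * sqrt Ec * K\<^sup>2) * \<epsilon>\<^sup>2
                  \<and> factorises C Cu Cd)
       \<and> (\<exists>Cu Cd. is_hs3 Cu \<and> is_hs3 Cd \<and> hs_norm3 Cu \<le> (2*K + 2 * sqrt Ec * K\<^sup>2) * \<epsilon>\<^sup>2 \<and> hs_norm3 Cd \<le> (2*K + 2 * sqrt Ec * K\<^sup>2) * \<epsilon>\<^sup>2
                  \<and> factorises Ct Cu Cd)"
proof -
  define K' where "K' = 2*K + 2 * sqrt Ec * K\<^sup>2"
  define \<eta> where "\<eta> = K * \<epsilon>"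
  have eta0: "0 \<le> \<eta>" using K e0 by (simp add: \<eta>_def)
  have eta1: "\<eta> \<le> 1"
  proof -
    have "K * \<epsilon> \<le> K * (1/K)" using e1 K by (intro mult_left_mono) auto
    then show ?thesis using K by (simp add: \<eta>_def)
  qed
  have hs: "is_hs4 P" using cp unfolding corner_tensor_def by blast
  have nP2: "(hs_norm4 P)\<^sup>2 \<le> \<eta>\<^sup>2"
    using nP unfolding \<eta>_def by (intro power_mono) (auto simp: hs_norm4_def intro!: infsum_nonneg split: prod.splits)
  define p where "p = (\<lambda>x::nat\<times>nat. P 0 0 (fst x) (snd x))"
  define q where "q = (\<lambda>x::nat\<times>nat. P 0 (snd x) (fst x) 0)"
  define u where "u = (\<lambda>x::nat\<times>nat. P (fst x) 0 0 (snd x))"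
  define v where "v = (\<lambda>x::nat\<times>nat. P (fst x) (snd x) 0 0)"
  define a where "a = (\<lambda>x::nat\<times>nat. lvec P (fst x) (snd x))"
  define b where "b = (\<lambda>x::nat\<times>nat. rvec P (fst x) (snd x))"
  have Bp: "(\<lambda>x. (p x)\<^sup>2) summable_on UNIV \<and> infsum (\<lambda>x. (p x)\<^sup>2) UNIV \<le> (hs_norm4 P)\<^sup>2"
    by (rule block[OF hs, of "\<lambda>x. (0,0,fst x, snd x)"]) (auto simp: inj_def prod_eq_iff p_def)
  have Bq: "(\<lambda>x. (q x)\<^sup>2) summable_on UNIV \<and> infsum (\<lambda>x. (q x)\<^sup>2) UNIV \<le> (hs_norm4 P)\<^sup>2"
    by (rule block[OF hs, of "\<lambda>x. (0,snd x,fst x,0)"]) (auto simp: inj_def prod_eq_iff q_def)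
  have Bu: "(\<lambda>x. (u x)\<^sup>2) summable_on UNIV \<and> infsum (\<lambda>x. (u x)\<^sup>2) UNIV \<le> (hs_norm4 P)\<^sup>2"
    by (rule block[OF hs, of "\<lambda>x. (fst x,0,0,snd x)"]) (auto simp: inj_def prod_eq_iff u_def)
  have Bv: "(\<lambda>x. (v x)\<^sup>2) summable_on UNIV \<and> infsum (\<lambda>x. (v x)\<^sup>2) UNIV \<le> (hs_norm4 P)\<^sup>2"
    by (rule block[OF hs, of "\<lambda>x. (fst x,snd x,0,0)"]) (auto simp: inj_def prod_eq_iff v_def)
  have ha: "((\<lambda>c. p (i,c) * q (j,c)) has_sum a (i,j)) UNIV" for i j
    using lvec_has_sum[OF cp, of i j] Bp Bq unfolding p_def q_def a_def by simp
  have hb: "((\<lambda>d. u (i,d) * v (j,d)) has_sum b (i,j)) UNIV" for i j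
    using rvec_has_sum[OF cp, of i j] Bu Bv unfolding u_def v_def b_def by simp
  have p0: "p (0,c) = 0" for c using corner_zeros[OF cp] by (simp add: p_def)
  have u0: "u (0,d) = 0" for d using corner_zeros[OF cp] by (simp add: u_def)
  interpret I: cl p q u v a b \<eta>
    by unfold_locales (use Bp Bq Bu Bv nP2 eta0 eta1 p0 u0 ha hb in auto)
  interpret J: cl "\<lambda>x. - p x" q "\<lambda>x. - u x" v "\<lambda>x. - a x" "\<lambda>x. - b x" \<eta>
  proof unfold_locales
    show "((\<lambda>c. - p (i, c) * q (j, c)) has_sum - a (i, j)) UNIV" for i j
      using has_sum_uminusI[OF ha[of i j]] by simp
    show "((\<lambda>d. - u (i, d) * v (j, d)) has_sum - b (i, j)) UNIV" for i j
      using has_sum_uminusI[OF hb[of i j]] by simp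
  qed (use Bp Bq Bu Bv nP2 eta0 eta1 p0 u0 in auto)
  have BI: "I.Bm = Bmat P"
    unfolding I.Bm_def by (auto simp: fun_eq_iff Bmat_def ev_def a_def b_def)
  have BJ: "J.Bm = (\<lambda>x z. - Bmat P x z)"
    unfolding J.Bm_def by (auto simp: fun_eq_iff Bmat_def ev_def a_def b_def)
  have K'pos: "K' \<ge> 0" using K Ec_nonneg by (simp add: K'_def)
  have nb: "sqrt (2*\<eta>\<^sup>2) \<le> K' * \<epsilon>"
  proof -
    have "sqrt (2*\<eta>\<^sup>2) \<le> sqrt ((2*\<eta>)\<^sup>2)" by (intro real_sqrt_le_mono) (simp add: power2_eq_square)
    also have "\<dots> = 2 * \<eta>" by (rule real_sqrt_unique) (use eta0 in auto)
    also have "\<dots> = 2 * K * \<epsilon>" by (simp add: \<eta>_def)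
    also have "\<dots> \<le> K' * \<epsilon>" using e0 K Ec_nonneg by (simp add: K'_def distrib_right)
    finally show ?thesis .
  qed
  have nc: "sqrt (4*Ec*\<eta>^4) \<le> K' * \<epsilon>\<^sup>2"
  proof -
    have "sqrt (4*Ec*\<eta>^4) = sqrt ((2 * sqrt Ec * \<eta>\<^sup>2)\<^sup>2)"
      using Ec_nonneg by (simp add: power_mult_distrib power4_eq_xxxx power2_eq_square)
    also have "\<dots> = 2 * sqrt Ec * \<eta>\<^sup>2" by (rule real_sqrt_unique) (use eta0 Ec_nonneg in auto)
    also have "\<dots> = 2 * sqrt Ec * K\<^sup>2 * \<epsilon>\<^sup>2" by (simp add: \<eta>_def power_mult_distrib)
    also have "\<dots> \<le> K' * \<epsilon>\<^sup>2" using e0 K by (simp add: K'_def distrib_right)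
    finally show ?thesis .
  qed
  obtain U1 D1 where B1: "hsq U1 (2*\<eta>\<^sup>2)" "hsq D1 (2*\<eta>\<^sup>2)" "factorises I.Bm U1 D1"
    using I.main_B by blast
  obtain U2 D2 where C2: "hsq U2 (4*Ec*\<eta>^4)" "hsq D2 (4*Ec*\<eta>^4)"
      "factorises (\<lambda>x z. mat_exp I.Bm x z - I.Bm x z - id_mat x z) U2 D2"
    using I.main_C by blast
  obtain U3 D3 where C3: "hsq U3 (4*Ec*\<eta>^4)" "hsq D3 (4*Ec*\<eta>^4)"
      "factorises (\<lambda>x z. mat_exp J.Bm x z - J.Bm x z - id_mat x z) U3 D3"
    using J.main_C by blast
  have f3: "factorises (\<lambda>x z. mat_exp (\<lambda>x z. - Bmat P x z) x z + Bmat P x z - id_mat x z) U3 D3"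
    using C3(3) unfolding BJ by simp
  have f1: "factorises (Bmat P) U1 D1" using B1(3) unfolding BI .
  have f2: "factorises (\<lambda>x z. mat_exp (Bmat P) x z - Bmat P x z - id_mat x z) U2 D2" using C2(3) unfolding BI .
  have r1: "is_hs3 U1 \<and> is_hs3 D1 \<and> hs_norm3 U1 \<le> K' * \<epsilon> \<and> hs_norm3 D1 \<le> K' * \<epsilon> \<and> factorises (Bmat P) U1 D1"
    using hsq_is_hs[OF B1(1)] hsq_is_hs[OF B1(2)] order.trans[OF hsq_norm[OF B1(1)] nb]
      order.trans[OF hsq_norm[OF B1(2)] nb] f1 by blast
  have r2: "is_hs3 U2 \<and> is_hs3 D2 \<and> hs_norm3 U2 \<le> K' * \<epsilon>\<^sup>2 \<and> hs_norm3 D2 \<le> K' * \<epsilon>\<^sup>2 \<and>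
        factorises (\<lambda>x z. mat_exp (Bmat P) x z - Bmat P x z - id_mat x z) U2 D2"
    using hsq_is_hs[OF C2(1)] hsq_is_hs[OF C2(2)] order.trans[OF hsq_norm[OF C2(1)] nc]
      order.trans[OF hsq_norm[OF C2(2)] nc] f2 by blast
  have r3: "is_hs3 U3 \<and> is_hs3 D3 \<and> hs_norm3 U3 \<le> K' * \<epsilon>\<^sup>2 \<and> hs_norm3 D3 \<le> K' * \<epsilon>\<^sup>2 \<and>
        factorises (\<lambda>x z. mat_exp (\<lambda>x z. - Bmat P x z) x z + Bmat P x z - id_mat x z) U3 D3"
    using hsq_is_hs[OF C3(1)] hsq_is_hs[OF C3(2)] order.trans[OF hsq_norm[OF C3(1)] nc]
      order.trans[OF hsq_norm[OF C3(2)] nc] f3 by blast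
  show ?thesis
    unfolding Let_def K'_def[symmetric]
    using r1 r2 r3 by blast
qed

theorem lemma1:
  fixes K :: real
  assumes "K > 0"
  shows "\<exists>K' > 0. \<exists>\<epsilon>0 > 0. \<forall>\<epsilon> P. 0 < \<epsilon> \<and> \<epsilon> \<le> \<epsilon>0 \<and> corner_tensor P \<and> hs_norm4 P \<le> K * \<epsilon> \<longrightarrow>
     (let B = Bmat P;
          C = (\<lambda>x z. mat_exp B x z - B x z - id_mat x z);
          Ct = (\<lambda>x z. mat_exp (\<lambda>x z. - B x z) x z + B x z - id_mat x z)
      in (\<exists>Bu Bd. is_hs3 Bu \<and> is_hs3 Bd \<and> hs_norm3 Bu \<le> K' * \<epsilon> \<and> hs_norm3 Bd \<le> K' * \<epsilon>
                  \<and> factorises B Bu Bd)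
       \<and> (\<exists>Cu Cd. is_hs3 Cu \<and> is_hs3 Cd \<and> hs_norm3 Cu \<le> K' * \<epsilon>\<^sup>2 \<and> hs_norm3 Cd \<le> K' * \<epsilon>\<^sup>2
                  \<and> factorises C Cu Cd)
       \<and> (\<exists>Cu Cd. is_hs3 Cu \<and> is_hs3 Cd \<and> hs_norm3 Cu \<le> K' * \<epsilon>\<^sup>2 \<and> hs_norm3 Cd \<le> K' * \<epsilon>\<^sup>2
                  \<and> factorises Ct Cu Cd))"
proof -
  have K'pos: "2*K + 2 * sqrt Ec * K\<^sup>2 > 0" using assms Ec_nonneg by (simp add: add_pos_nonneg)
  have e0: "1/K > 0" using assms by simp
  show ?thesis
    apply (rule exI[of _ "2*K + 2 * sqrt Ec * K\<^sup>2"])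
    apply (rule conjI[OF K'pos])
    apply (rule exI[of _ "1/K"])
    apply (rule conjI[OF e0])
    apply (intro allI impI)
    apply (elim conjE)
    apply (rule main_fixed[OF assms])
       apply assumption+
    done
qed


end
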